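(* For two finite subsets $D_1, D_2 \subset \mathbb{N}$, \[ \alpha(D_1 \cup D_2) \geq \alpha(D_1)\,\alpha(D_2). \]
   Context: For a finite $D \subset \mathbb{N} = \{1,2,\ldots\}$ and $n \geq 1$, the circulant graph $G_n$ with set of distances $D$ has vertex set $\{0, \ldots, n-1\}$, vertices $u, v$ (possibly equal) being adjacent iff $u - v \equiv d$ or $v - u \equiv d \pmod n$ for some $d \in D$. $\alpha(G)$ is the maximum size of an independent set (no two adjacent vertices, no looped vertex), and $\alpha(D) := \lim_{n\to\infty} \alpha(G_n)/n$ (which exists). *)

theory Defs
  imports Complex_Main
begin

definition circ_adj :: "nat set \<Rightarrow> nat \<Rightarrow> nat \<Rightarrow> nat \<Rightarrow> bool" where
  "circ_adj D n u v \<longleftrightarrow>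
     (\<exists>d\<in>D. (int u - int v) mod int n = int d mod int n \<or> (int v - int u) mod int n = int d mod int n)"

text \<open>Independent set: no two (possibly equal) vertices adjacent, so no looped vertex.\<close>
definition circ_indep :: "nat set \<Rightarrow> nat \<Rightarrow> nat set \<Rightarrow> bool" where
  "circ_indep D n S \<longleftrightarrow> S \<subseteq> {0..<n} \<and> (\<forall>u\<in>S. \<forall>v\<in>S. \<not> circ_adj D n u v)"

definition circ_alpha :: "nat set \<Rightarrow> nat \<Rightarrow> nat" where
  "circ_alpha D n = Max (card ` {S. circ_indep D n S})"

definition alpha_dist :: "nat set \<Rightarrow> real" where
  "alpha_dist D = lim (\<lambda>n. real (circ_alpha D n) / real n)"

end

theory Submission imports Defs "HOL-Real_Asymp.Real_Asymp" begin

definition pindep :: "nat set \<Rightarrow> nat \<Rightarrow> nat set \<Rightarrow> bool" where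
  "pindep D n S \<longleftrightarrow> S \<subseteq> {0..<n} \<and> (\<forall>u\<in>S. \<forall>v\<in>S. \<forall>d\<in>D. u \<noteq> v + d)"

definition palpha :: "nat set \<Rightarrow> nat \<Rightarrow> nat" where
  "palpha D n = Max (card ` {S. pindep D n S})"

lemma circ_fin: "finite (card ` {S. circ_indep D n S})"
proof -
  have "{S. circ_indep D n S} \<subseteq> Pow {0..<n}" by (auto simp: circ_indep_def)
  then show ?thesis by (meson finite_Pow_iff finite_atLeastLessThan finite_imageI finite_subset)
qed

lemma circ_ge: "circ_indep D n S \<Longrightarrow> card S \<le> circ_alpha D n"
  unfolding circ_alpha_def using circ_fin by (simp add: Max_ge)

lemma circ_obt: "\<exists>S. circ_indep D n S \<and> card S = circ_alpha D n"
proof -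
  have "circ_indep D n {}" by (simp add: circ_indep_def)
  then have "card ` {S. circ_indep D n S} \<noteq> {}" by blast
  from Max_in[OF circ_fin this] show ?thesis unfolding circ_alpha_def by auto
qed

lemma p_fin: "finite (card ` {S. pindep D n S})"
proof -
  have "{S. pindep D n S} \<subseteq> Pow {0..<n}" by (auto simp: pindep_def)
  then show ?thesis by (meson finite_Pow_iff finite_atLeastLessThan finite_imageI finite_subset)
qed

lemma p_ge: "pindep D n S \<Longrightarrow> card S \<le> palpha D n"
  unfolding palpha_def using p_fin by (simp add: Max_ge)

lemma p_obt: "\<exists>S. pindep D n S \<and> card S = palpha D n"
proof -
  have "pindep D n {}" by (simp add: pindep_def)
  then have "card ` {S. pindep D n S} \<noteq> {}" by blast
  from Max_in[OF p_fin this] show ?thesis unfolding palpha_def by auto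
qed

lemma p_le: "palpha D n \<le> n"
proof -
  obtain S where "pindep D n S" "card S = palpha D n" using p_obt by blast
  then show ?thesis unfolding pindep_def by (metis card_atLeastLessThan card_mono finite_atLeastLessThan minus_nat.diff_0)
qed

lemma p_sub: "palpha D (m + n) \<le> palpha D m + palpha D n"
proof -
  obtain S where S: "pindep D (m+n) S" "card S = palpha D (m+n)" using p_obt by blast
  let ?A = "S \<inter> {0..<m}" and ?B = "S \<inter> {m..<m+n}"
  have fin: "finite S" using S(1) unfolding pindep_def using finite_subset by blast
  have "S = ?A \<union> ?B" using S(1) unfolding pindep_def by auto
  then have "card S = card ?A + card ?B"
    by (metis (no_types, lifting) card_Un_disjoint fin finite_Int Int_assoc atLeastLessThan_iff disjoint_iff inf.idem inf_commute le_less_trans less_irrefl not_le IntE)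
  moreover have "pindep D m ?A" using S(1) unfolding pindep_def by auto
  then have "card ?A \<le> palpha D m" by (rule p_ge)
  moreover have "pindep D n ((\<lambda>x. x - m) ` ?B)" using S(1) unfolding pindep_def
    by (auto, metis add_diff_cancel_left' le_add_diff_inverse add.assoc)
  then have "card ((\<lambda>x. x - m) ` ?B) \<le> palpha D n" by (rule p_ge)
  moreover have "card ((\<lambda>x. x - m) ` ?B) = card ?B"
    by (rule card_image) (auto simp: inj_on_def)
  ultimately show ?thesis using S(2) by linarith
qed

lemma circ_le_p: "circ_alpha D n \<le> palpha D n"
proof -
  obtain S where S: "circ_indep D n S" "card S = circ_alpha D n" using circ_obt by blast
  have "pindep D n S" using S(1) unfolding pindep_def circ_indep_def circ_adj_def
    by (auto, metis add_diff_cancel_left' of_nat_add)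
  then show ?thesis using S(2) p_ge by metis
qed

lemma p_le_circ:
  assumes "\<forall>d\<in>D. 0 < d \<and> d \<le> m" "m < n"
  shows "palpha D (n - m) \<le> circ_alpha D n"
proof -
  obtain S where S: "pindep D (n-m) S" "card S = palpha D (n-m)" using p_obt by blast
  have "circ_indep D n S" unfolding circ_indep_def
  proof safe
    show "x \<in> {0..<n}" if "x \<in> S" for x using S(1) that unfolding pindep_def by auto
  next
    fix u v assume uv: "u \<in> S" "v \<in> S" "circ_adj D n u v"
    then obtain d where d: "d \<in> D" and h: "(int u - int v) mod int n = int d mod int n \<or> (int v - int u) mod int n = int d mod int n"
      unfolding circ_adj_def by blast
    have b: "u < n - m" "v < n - m" "0 < d" "d \<le> m" using uv S(1) d assms unfolding pindep_def by auto
    have key: "x = y" if "x \<in> S" "y \<in> S" "(int x - int y) mod int n = int d mod int n" for x y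
    proof -
      have "int n dvd (int x - int y - int d)" using that by (metis mod_eq_dvd_iff)
      moreover have "x < n - m" "y < n - m" using that S(1) unfolding pindep_def by auto
      then have "\<bar>int x - int y - int d\<bar> < int n" using b assms by auto
      ultimately have "int x - int y - int d = 0" using dvd_imp_le_int[of "int x - int y - int d" "int n"] by linarith
      then have "x = y + d" by linarith
      then show ?thesis using that S(1) d unfolding pindep_def by auto
    qed
    have "int d mod int n = int d" using b assms by simp
    then have "u = v \<or> v = u" using h key uv by metis
    then show False using b(3) h
      by (metis \<open>int d mod int n = int d\<close> cancel_comm_monoid_add_class.diff_cancel mod_0 of_nat_0_less_iff order_less_irrefl)
  qed
  then show ?thesis using S(2) circ_ge by metis
qed


lemma sub_mult:
  fixes b :: "nat \<Rightarrow> nat"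
  assumes sub: "\<And>m n. b (m+n) \<le> b m + b n"
  shows "b (q*k + r) \<le> q * b k + b r"
proof (induction q)
  case 0 then show ?case by simp
next
  case (Suc q)
  have "b (Suc q * k + r) = b (k + (q*k + r))" by (simp add: algebra_simps)
  also have "\<dots> \<le> b k + b (q*k+r)" by (rule sub)
  finally show ?case using Suc by simp
qed

lemma fekete:
  fixes b :: "nat \<Rightarrow> nat"
  assumes sub: "\<And>m n. b (m+n) \<le> b m + b n" and le: "\<And>n. b n \<le> n"
  shows "(\<lambda>n. real (b n) / real n) \<longlonglongrightarrow> Inf ((\<lambda>n. real (b n) / real n) ` {1..})"
proof -
  define f where "f = (\<lambda>n. real (b n) / real n)"
  define \<beta> where "\<beta> = Inf (f ` {1..})"
  have bdd: "bdd_below (f ` {1..})" unfolding f_def by (rule bdd_belowI[of _ 0]) auto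
  have lower: "\<beta> \<le> f n" if "n \<ge> 1" for n unfolding \<beta>_def using bdd that by (auto intro: cInf_lower)
  have "f \<longlonglongrightarrow> \<beta>"
  proof (rule LIMSEQ_I)
    fix r :: real assume r: "0 < r"
    have ne: "f ` {1..} \<noteq> {}" by auto
    have "\<beta> < \<beta> + r/2" using r by simp
    then obtain k where k: "k \<ge> 1" "f k < \<beta> + r/2" using cInf_lessD[OF ne, of "\<beta> + r/2"] unfolding \<beta>_def by auto
    define no where "no = nat \<lceil>2 * real k / r\<rceil> + 1"
    show "\<exists>no. \<forall>n\<ge>no. norm (f n - \<beta>) < r"
    proof (intro exI allI impI)
      fix n assume n: "no \<le> n"
      have n1: "n \<ge> 1" using n no_def by simp
      have npos: "real n > 0" using n1 by simp
      have "2 * real k / r < real n" using n unfolding no_def by linarith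
      then have kn: "real k / real n < r/2" using r npos by (simp add: field_simps)
      have "b n = b ((n div k) * k + n mod k)" by simp
      also have "\<dots> \<le> (n div k) * b k + b (n mod k)" by (rule sub_mult[OF sub])
      also have "\<dots> \<le> (n div k) * b k + k" using le[of "n mod k"] k(1)
        by (metis add_left_mono le_trans less_imp_le_nat mod_less_divisor zero_less_iff_neq_zero not_one_le_zero)
      finally have "real (b n) \<le> real (n div k) * real (b k) + real k" by (metis of_nat_add of_nat_le_iff of_nat_mult)
      moreover have "real (n div k) \<le> real n / real k" by (rule of_nat_div_le_of_nat)
      then have "real (n div k) * real (b k) \<le> real n / real k * real (b k)" using mult_right_mono by fastforce
      ultimately have "real (b n) \<le> real n * f k + real k" unfolding f_def by simp
      then have "f n \<le> f k + real k / real n" unfolding f_def using npos by (simp add: field_simps)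
      then have "f n < \<beta> + r" using k kn by linarith
      moreover have "\<beta> \<le> f n" using lower n1 by simp
      ultimately show "norm (f n - \<beta>) < r" by simp
    qed
  qed
  then show ?thesis unfolding f_def \<beta>_def .
qed


lemma adj_mod:
  assumes "k dvd N" "circ_adj D N u v"
  shows "circ_adj D k (u mod k) (v mod k)"
proof -
  have kd: "int k dvd int N" using assms(1) by simp
  have e1: "(int (u mod k) - int (v mod k)) mod int k = (int u - int v) mod int k"
    by (simp add: of_nat_mod mod_diff_eq)
  have e2: "(int (v mod k) - int (u mod k)) mod int k = (int v - int u) mod int k"
    by (simp add: of_nat_mod mod_diff_eq)
  have r: "x mod int k = y mod int k" if "x mod int N = y mod int N" for x y :: int
    using that mod_mod_cancel[OF kd] by metis
  from assms(2) obtain d where "d \<in> D" "(int u - int v) mod int N = int d mod int N \<or> (int v - int u) mod int N = int d mod int N"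
    unfolding circ_adj_def by blast
  then show ?thesis unfolding circ_adj_def using e1 e2 r by metis
qed

lemma prod_bound:
  assumes "n \<ge> 1"
  shows "circ_alpha D1 n * circ_alpha D2 (Suc n) \<le> circ_alpha (D1 \<union> D2) (n * Suc n)"
proof -
  obtain S1 where S1: "circ_indep D1 n S1" "card S1 = circ_alpha D1 n" using circ_obt by blast
  obtain S2 where S2: "circ_indep D2 (Suc n) S2" "card S2 = circ_alpha D2 (Suc n)" using circ_obt by blast
  define N where "N = n * Suc n"
  define f where "f = (\<lambda>x::nat. (x mod n, x mod Suc n))"
  define S where "S = {x \<in> {0..<N}. f x \<in> S1 \<times> S2}"
  have inj: "inj_on f {0..<N}"
  proof (rule inj_onI)
    have main: "x = y" if "x \<in> {0..<N}" "y \<in> {0..<N}" "f x = f y" "y \<le> x" for x y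
    proof -
      have "n dvd x - y" "Suc n dvd x - y" using that unfolding f_def
        by (auto simp: mod_eq_dvd_iff_nat)
      then have "N dvd x - y" unfolding N_def by (rule divides_mult) simp
      moreover have "x - y < N" using that by auto
      ultimately show ?thesis using that(4) by (metis diff_is_0_eq dvd_imp_le le_antisym not_less zero_less_iff_neq_zero)
    qed
    fix x y assume "x \<in> {0..<N}" "y \<in> {0..<N}" "f x = f y"
    then show "x = y" using main[of x y] main[of y x] by (metis nat_le_linear)
  qed
  have sub: "f ` {0..<N} \<subseteq> {0..<n} \<times> {0..<Suc n}" unfolding f_def using assms by auto
  have "card (f ` {0..<N}) = card ({0..<n} \<times> {0..<Suc n})"
    using card_image[OF inj] by (simp add: N_def card_cartesian_product)
  then have im: "f ` {0..<N} = {0..<n} \<times> {0..<Suc n}"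
    using sub by (simp add: card_subset_eq)
  have T: "S1 \<times> S2 \<subseteq> {0..<n} \<times> {0..<Suc n}" using S1(1) S2(1) unfolding circ_indep_def by auto
  have "f ` S = S1 \<times> S2"
  proof
    show "f ` S \<subseteq> S1 \<times> S2" unfolding S_def by auto
    show "S1 \<times> S2 \<subseteq> f ` S"
    proof
      fix p assume p: "p \<in> S1 \<times> S2"
      then obtain x where "x \<in> {0..<N}" "f x = p" using im T by (metis imageE subsetD)
      then show "p \<in> f ` S" unfolding S_def using p by auto
    qed
  qed
  moreover have "inj_on f S" using inj unfolding S_def by (rule inj_on_subset) auto
  ultimately have cS: "card S = card S1 * card S2" using card_image card_cartesian_product by metis
  have "circ_indep (D1 \<union> D2) N S" unfolding circ_indep_def
  proof safe
    show "x \<in> {0..<N}" if "x \<in> S" for x using that unfolding S_def by auto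
  next
    fix u v assume uv: "u \<in> S" "v \<in> S" "circ_adj (D1 \<union> D2) N u v"
    have m: "u mod n \<in> S1" "v mod n \<in> S1" "u mod Suc n \<in> S2" "v mod Suc n \<in> S2"
      using uv unfolding S_def f_def by auto
    from uv(3) have "circ_adj D1 N u v \<or> circ_adj D2 N u v" unfolding circ_adj_def by blast
    then show False
    proof
      assume "circ_adj D1 N u v"
      then have "circ_adj D1 n (u mod n) (v mod n)" by (rule adj_mod[rotated]) (simp add: N_def)
      then show False using S1(1) m unfolding circ_indep_def by blast
    next
      assume "circ_adj D2 N u v"
      then have "circ_adj D2 (Suc n) (u mod Suc n) (v mod Suc n)" by (rule adj_mod[rotated]) (metis N_def dvd_triv_right)
      then show False using S2(1) m unfolding circ_indep_def by blast
    qed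
  qed
  then have "card S \<le> circ_alpha (D1 \<union> D2) N" by (rule circ_ge)
  then show ?thesis using cS S1(2) S2(2) N_def by simp
qed

definition beta :: "nat set \<Rightarrow> real" where
  "beta D = Inf ((\<lambda>n. real (palpha D n) / real n) ` {1..})"

lemma circ_lim:
  assumes "finite D" "0 \<notin> D"
  shows "(\<lambda>n. real (circ_alpha D n) / real n) \<longlonglongrightarrow> beta D"
proof -
  define m where "m = Max (insert 0 D)"
  have dm: "\<forall>d\<in>D. 0 < d \<and> d \<le> m" using assms unfolding m_def by (metis Max_ge finite_insert insertCI neq0_conv)
  have g: "(\<lambda>n. real (palpha D n) / real n) \<longlonglongrightarrow> beta D"
    unfolding beta_def by (rule fekete) (auto intro: p_sub p_le)
  have q: "(\<lambda>n. real n / real (n + m)) \<longlonglongrightarrow> 1" by real_asymp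
  have "(\<lambda>n. real (palpha D n) / real n * (real n / real (n + m))) \<longlonglongrightarrow> beta D * 1"
    by (rule tendsto_mult[OF g q])
  moreover have eq: "(\<lambda>n. real (palpha D n) / real n * (real n / real (n + m))) = (\<lambda>n. real (palpha D (n + m - m)) / real (n + m))"
    by (rule ext, case_tac "n = 0") (use p_le[of D 0] in auto)
  ultimately have "(\<lambda>n. real (palpha D (n + m - m)) / real (n + m)) \<longlonglongrightarrow> beta D" by (simp only: eq mult_1_right)
  then have l: "(\<lambda>n. real (palpha D (n - m)) / real n) \<longlonglongrightarrow> beta D"
    by (rule LIMSEQ_offset)
  show ?thesis
  proof (rule tendsto_sandwich[OF _ _ l g])
    show "\<forall>\<^sub>F n in sequentially. real (palpha D (n - m)) / real n \<le> real (circ_alpha D n) / real n"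
      using eventually_gt_at_top[of m]
      by eventually_elim (use p_le_circ[OF dm] in \<open>auto intro!: divide_right_mono\<close>)
    show "\<forall>\<^sub>F n in sequentially. real (circ_alpha D n) / real n \<le> real (palpha D n) / real n"
      by (rule always_eventually) (auto intro!: divide_right_mono circ_le_p)
  qed
qed

theorem proposition5:
  fixes D1 D2 :: "nat set"
  assumes "finite D1" and "0 \<notin> D1" and "finite D2" and "0 \<notin> D2"
  shows "alpha_dist (D1 \<union> D2) \<ge> alpha_dist D1 * alpha_dist D2"
proof -
  define F where "F = (\<lambda>D n. real (circ_alpha D n) / real n)"
  have l1: "F D1 \<longlonglongrightarrow> beta D1" unfolding F_def using circ_lim assms by blast
  have l2: "F D2 \<longlonglongrightarrow> beta D2" unfolding F_def using circ_lim assms by blast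
  have l12: "F (D1 \<union> D2) \<longlonglongrightarrow> beta (D1 \<union> D2)" unfolding F_def using circ_lim assms
    by (metis Un_iff finite_UnI)
  have sm: "strict_mono (\<lambda>n::nat. n * Suc n)"
    unfolding strict_mono_Suc_iff by simp
  have a: "(\<lambda>n. F (D1 \<union> D2) (n * Suc n)) \<longlonglongrightarrow> beta (D1 \<union> D2)"
    using LIMSEQ_subseq_LIMSEQ[OF l12 sm] by (simp add: o_def)
  have b: "(\<lambda>n. F D1 n * F D2 (Suc n)) \<longlonglongrightarrow> beta D1 * beta D2"
    by (rule tendsto_mult[OF l1 LIMSEQ_Suc[OF l2]])
  have "beta D1 * beta D2 \<le> beta (D1 \<union> D2)"
  proof (rule LIMSEQ_le[OF b a], intro exI allI impI)
    fix n :: nat assume n: "1 \<le> n"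
    have "real (circ_alpha D1 n * circ_alpha D2 (Suc n)) \<le> real (circ_alpha (D1 \<union> D2) (n * Suc n))"
      using prod_bound[OF n, of D1 D2] by (simp only: of_nat_le_iff)
    then have "real (circ_alpha D1 n) * real (circ_alpha D2 (Suc n)) / real (n * Suc n)
         \<le> real (circ_alpha (D1 \<union> D2) (n * Suc n)) / real (n * Suc n)"
      by (intro divide_right_mono) auto
    then show "F D1 n * F D2 (Suc n) \<le> F (D1 \<union> D2) (n * Suc n)"
      unfolding F_def by (simp add: field_simps)
  qed
  moreover have "alpha_dist D1 = beta D1" "alpha_dist D2 = beta D2" "alpha_dist (D1 \<union> D2) = beta (D1 \<union> D2)"
    unfolding alpha_dist_def using l1 l2 l12 limI unfolding F_def by blast+
  ultimately show ?thesis by simp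
qed

end
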